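(* Let $V$ be a preference profile over a finite candidate set $C$ with a fixed tie-breaking order, and let $w$ be the 3-Approval winner at $V$. Let $Q$ be the set of candidates $x$ such that some voter $i$ with $w\in\mathrm{top}_3(v_i)$ (a Type 2 manipulator) manipulates in favour of $x$, i.e. has a vote $v_i'$ with $3\text{-App}(V_{-i},v_i')=x$ and $x\succ_i w$. Then $|Q|\le 2$.
   Context: Each voter $i$ has a strict linear order $v_i$ over $C$; $x\succ_i y$ means $i$ ranks $x$ above $y$; $\mathrm{top}_3(v)$ is the set of the three highest-ranked candidates of $v$. 3-Approval ($3\text{-App}$): each candidate gets one point from each voter ranking her among his top three; the highest score wins, ties broken in favour of the candidate highest in the fixed strict linear order on $C$. $(V_{-i},v_i')$ denotes $V$ with $v_i$ replaced by $v_i'$. *)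

theory Defs
  imports Main
begin

text \<open>A vote (strict linear order over the candidate set C) is a list of distinct
  candidates enumerating C, best first.  The fixed tie-breaking order is also such a list,
  earlier meaning higher priority.\<close>

definition is_ranking :: "'a set \<Rightarrow> 'a list \<Rightarrow> bool" where
  "is_ranking C v \<longleftrightarrow> distinct v \<and> set v = C"

definition prefers :: "'a list \<Rightarrow> 'a \<Rightarrow> 'a \<Rightarrow> bool" where
  "prefers v x y \<longleftrightarrow> (\<exists>k l. k < l \<and> l < length v \<and> v ! k = x \<and> v ! l = y)"

definition top3 :: "'a list \<Rightarrow> 'a set" where
  "top3 v = set (take 3 v)"

definition app_score :: "'a list list \<Rightarrow> 'a \<Rightarrow> nat" where
  "app_score V x = card {i. i < length V \<and> x \<in> top3 (V ! i)}"

definition app3 :: "'a list \<Rightarrow> 'a list list \<Rightarrow> 'a" where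
  "app3 t V = hd (filter (\<lambda>x. app_score V x = Max (app_score V ` set t)) t)"

end

theory Submission
  imports Defs
begin

fun idx :: "'a list \<Rightarrow> 'a \<Rightarrow> nat" where
  "idx [] x = 0"
| "idx (a # xs) x = (if a = x then 0 else Suc (idx xs x))"

lemma idx_nth: "x \<in> set xs \<Longrightarrow> xs ! idx xs x = x"
  by (induction xs) auto

lemma idx_inj: "x \<in> set xs \<Longrightarrow> y \<in> set xs \<Longrightarrow> idx xs x = idx xs y \<Longrightarrow> x = y"
  by (metis idx_nth)

lemma hd_filter_min:
  assumes "filter P xs \<noteq> []"
  shows "hd (filter P xs) \<in> set xs \<and> P (hd (filter P xs)) \<and>
         (\<forall>y\<in>set xs. P y \<longrightarrow> idx xs (hd (filter P xs)) \<le> idx xs y)"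
  using assms
proof (induction xs)
  case Nil then show ?case by simp
next
  case (Cons a xs)
  show ?case
  proof (cases "P a")
    case True then show ?thesis by simp
  next
    case False
    then have ne: "filter P xs \<noteq> []" using Cons.prems by simp
    note IH = Cons.IH[OF ne]
    have "hd (filter P xs) \<noteq> a" using IH False by metis
    then show ?thesis using IH False by auto
  qed
qed

definition beats :: "('a \<Rightarrow> nat) \<Rightarrow> 'a list \<Rightarrow> 'a \<Rightarrow> 'a \<Rightarrow> bool" where
  "beats s t y x \<longleftrightarrow> s y > s x \<or> (s y = s x \<and> idx t y < idx t x)"

lemma app3_max:
  assumes "distinct t" "t \<noteq> []"
  shows "app3 t W \<in> set t \<and>
     (\<forall>y\<in>set t. y \<noteq> app3 t W \<longrightarrow> beats (app_score W) t (app3 t W) y)"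
proof -
  define s where "s = app_score W"
  define M where "M = Max (s ` set t)"
  define P where "P = (\<lambda>x. s x = M)"
  have fin: "finite (s ` set t)" by simp
  have "M \<in> s ` set t" unfolding M_def using assms(2) by (intro Max_in) auto
  then obtain z where z: "z \<in> set t" "P z" unfolding P_def by auto
  then have ne: "filter P t \<noteq> []" by (metis filter_empty_conv)
  have eq: "app3 t W = hd (filter P t)" unfolding app3_def P_def M_def s_def by simp
  note H = hd_filter_min[OF ne]
  show ?thesis
  proof (intro conjI ballI impI)
    show "app3 t W \<in> set t" using H eq by simp
  next
    fix y assume y: "y \<in> set t" "y \<noteq> app3 t W"
    have sy: "s y \<le> M" unfolding M_def using y by simp
    have sw: "s (app3 t W) = M" using H eq P_def by simp
    show "beats (app_score W) t (app3 t W) y"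
    proof (cases "s y = M")
      case True
      then have "idx t (app3 t W) \<le> idx t y" using H eq y P_def by auto
      moreover have "idx t (app3 t W) \<noteq> idx t y" using idx_inj H eq y by metis
      ultimately show ?thesis using True sw unfolding beats_def s_def by auto
    next
      case False then show ?thesis using sy sw unfolding beats_def s_def by auto
    qed
  qed
qed

lemma score_ge:
  assumes "i < length V" "y \<notin> top3 (V ! i)"
  shows "app_score V y \<le> app_score (V[i := v']) y"
  unfolding app_score_def
  by (rule card_mono) (use assms in \<open>auto simp: nth_list_update\<close>)

lemma score_le:
  assumes "i < length V" "y \<in> top3 (V ! i)"
  shows "app_score (V[i := v']) y \<le> app_score V y"
  unfolding app_score_def
  by (rule card_mono) (use assms in \<open>auto simp: nth_list_update\<close>)

lemma prefers_top3:
  assumes "distinct v" "prefers v x w" "w \<in> top3 v"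
  shows "x \<in> top3 v" "x \<noteq> w"
proof -
  obtain k l where kl: "k < l" "l < length v" "v ! k = x" "v ! l = w"
    using assms(2) unfolding prefers_def by auto
  obtain l' where l': "l' < length (take 3 v)" "take 3 v ! l' = w"
    using assms(3) unfolding top3_def by (metis in_set_conv_nth)
  have "l' = l" using l' kl assms(1)
    by (metis length_take min_less_iff_conj nth_eq_iff_index_eq nth_take)
  then show "x \<in> top3 v" using kl l' unfolding top3_def
    by (metis in_set_conv_nth length_take min_less_iff_conj nth_take order.strict_trans)
  show "x \<noteq> w" using kl assms(1) by (metis nat_neq_iff nth_eq_iff_index_eq order.strict_trans)
qed

lemma card_top3: "card (top3 v) \<le> 3"
  unfolding top3_def by (metis card_length length_take min_le_iff_disj order_trans le_refl)

theorem mainTheorem11: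
  fixes C :: "'a set" and t :: "'a list" and V :: "'a list list"
  assumes "finite C" and "C \<noteq> {}"
    and "is_ranking C t"
    and "\<forall>v\<in>set V. is_ranking C v"
  shows "card {x. \<exists>i < length V. app3 t V \<in> top3 (V ! i) \<and>
                   (\<exists>v'. is_ranking C v' \<and> app3 t (V[i := v']) = x
                         \<and> prefers (V ! i) x (app3 t V))} \<le> 2"
proof -
  let ?Q = "{x. \<exists>i < length V. app3 t V \<in> top3 (V ! i) \<and>
                   (\<exists>v'. is_ranking C v' \<and> app3 t (V[i := v']) = x
                         \<and> prefers (V ! i) x (app3 t V))}"
  define w where "w = app3 t V"
  define s where "s = app_score V"
  define B where "B = beats s t"
  define rk where "rk = (\<lambda>x. card {y\<in>C. B y x})"
  have dt: "distinct t" and Ct: "set t = C" using assms(3) unfolding is_ranking_def by auto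
  have tne: "t \<noteq> []" using Ct assms(2) by auto
  have wmax: "w \<in> C" "\<And>y. y \<in> C \<Longrightarrow> y \<noteq> w \<Longrightarrow> B w y"
    using app3_max[OF dt tne, of V] Ct unfolding w_def B_def s_def by auto
  have Btrans: "B x z" if "B x y" "B y z" for x y z
    using that unfolding B_def beats_def by auto
  have Birr: "\<not> B x x" for x unfolding B_def beats_def by auto
  have Btot: "B x y \<or> B y x" if "x \<in> C" "y \<in> C" "x \<noteq> y" for x y
    using that idx_inj[of x t y] Ct unfolding B_def beats_def by (metis linorder_neqE_nat)
  have rk_lt: "rk x < rk y" if "B x y" "x \<in> C" for x y
  proof -
    have "{z\<in>C. B z x} \<subset> {z\<in>C. B z y}"
      using that Btrans Birr by blast
    then show ?thesis unfolding rk_def using assms(1) by (intro psubset_card_mono) auto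
  qed
  have rk_inj: "inj_on rk C"
    by (rule inj_onI) (metis Btot rk_lt less_irrefl)
  have rkw: "rk w = 0" unfolding rk_def using wmax Btrans Birr
    by (metis (no_types, lifting) Collect_empty_eq card.empty Btot)
  have Qsub: "?Q \<subseteq> C" and Qrk: "\<And>x. x \<in> ?Q \<Longrightarrow> rk x \<in> {1,2}"
  proof -
    have main: "x \<in> C \<and> rk x \<in> {1,2}" if xQ: "x \<in> ?Q" for x
    proof -
      obtain i v' where i: "i < length V" "w \<in> top3 (V ! i)" "is_ranking C v'"
        "app3 t (V[i := v']) = x" "prefers (V ! i) x w"
        using xQ unfolding w_def by blast
      have "V ! i \<in> set V" using i(1) by simp
      then have dv: "distinct (V ! i)" using assms(4) unfolding is_ranking_def by auto
      have xt: "x \<in> top3 (V ! i)" and xw: "x \<noteq> w" using prefers_top3[OF dv i(5) i(2)] by auto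
      have xmax: "x \<in> C" "\<And>y. y \<in> C \<Longrightarrow> y \<noteq> x \<Longrightarrow> beats (app_score (V[i := v'])) t x y"
        using app3_max[OF dt tne, of "V[i := v']"] Ct i(4) by auto
      have sub: "{y\<in>C. B y x} \<subseteq> top3 (V ! i) - {x}"
      proof
        fix y assume y: "y \<in> {y\<in>C. B y x}"
        show "y \<in> top3 (V ! i) - {x}"
        proof (rule ccontr)
          assume "y \<notin> top3 (V ! i) - {x}"
          then have yn: "y \<notin> top3 (V ! i)" "y \<noteq> x" using y Birr by auto
          have "beats (app_score (V[i := v'])) t x y" using xmax y yn by auto
          moreover have "app_score V y \<le> app_score (V[i := v']) y" using score_ge i(1) yn by metis
          moreover have "app_score (V[i := v']) x \<le> app_score V x" using score_le i(1) xt by metis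
          ultimately have "B x y" unfolding B_def beats_def s_def by auto
          then show False using y Btrans Birr by blast
        qed
      qed
      have "card (top3 (V ! i) - {x}) \<le> 2" using card_top3[of "V ! i"] xt
        by (simp add: top3_def)
      then have "rk x \<le> 2" unfolding rk_def
        by (metis (no_types, lifting) sub card_mono finite_Diff finite_set top3_def order_trans)
      moreover have "rk x \<noteq> 0" using rk_inj rkw xw xmax(1) wmax(1) by (metis inj_on_def)
      ultimately show ?thesis using xmax(1) by auto
    qed
    show "?Q \<subseteq> C" using main by blast
    show "\<And>x. x \<in> ?Q \<Longrightarrow> rk x \<in> {1,2}" using main by blast
  qed
  have "card ?Q = card (rk ` ?Q)"
    using inj_on_subset[OF rk_inj Qsub] by (simp add: card_image)
  also have "\<dots> \<le> card {1::nat, 2}" using Qrk by (intro card_mono) auto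
  finally show ?thesis by simp
qed

end
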